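(* For every path $\pi$, every message $t$ and all $i,k\in\mathbb{N}$ with $i\le k$: if $\pi(k)$ has $t$, then either $\pi(i)$ is a subterm of $\pi(k)$, or there exists $j\in\mathbb{N}$ with $i\le j<k$ and $\pi(j+1)=\mathrm{ex}(t,\pi(j))$.
   Context: Messages form a set $\mathcal{T}$ (terms of a cryptographic message algebra; only their identity matters here). TPM machine states are the terms of sort $\mathsf{M}$ generated by a constant $\mathrm{bt}$ (boot) and a constructor $\mathrm{ex}:\mathcal{T}\times\mathsf{M}\to\mathsf{M}$ (extend); these are free constructors, so distinct terms are distinct states. The TPM transition relation $\leadsto$ on states is defined by: $m_0\leadsto m_1$ iff $m_1=\mathrm{bt}$, or $m_1=\mathrm{ex}(t,m_0)$ for some message $t$, or $m_0=m_1$. A path is an infinite sequence $\pi:\mathbb{N}\to\mathsf{M}$ with $\pi(0)=\mathrm{bt}$ and $\pi(i)\leadsto\pi(i+1)$ for all $i$. A state $m$ has a message $t$ if some state of the form $\mathrm{ex}(t,m')$ is a subterm of $m$ (e.g. $\mathrm{ex}(\text{obtain},\mathrm{ex}(v,\mathrm{bt}))$ has obtain and $v$ but not refuse). For states, $m$ is a subterm of $m'$ means $m'=\mathrm{ex}(t_1,\mathrm{ex}(t_2,\dots\mathrm{ex}(t_r,m)\dots))$ for some $r\ge 0$ and messages $t_1,\dots,t_r$. *)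

theory Defs
  imports Main
begin

datatype 'msg state = bt | ex 'msg "'msg state"

definition tpm_trans :: "'msg state \<Rightarrow> 'msg state \<Rightarrow> bool" where
  "tpm_trans m0 m1 \<longleftrightarrow> m1 = bt \<or> (\<exists>t. m1 = ex t m0) \<or> m0 = m1"

definition is_path :: "(nat \<Rightarrow> 'msg state) \<Rightarrow> bool" where
  "is_path \<pi> \<longleftrightarrow> \<pi> 0 = bt \<and> (\<forall>i. tpm_trans (\<pi> i) (\<pi> (Suc i)))"

inductive subterm :: "'msg state \<Rightarrow> 'msg state \<Rightarrow> bool" where
  subterm_refl: "subterm m m"
| subterm_ex: "subterm m m' \<Longrightarrow> subterm m (ex t m')"

definition has_msg :: "'msg state \<Rightarrow> 'msg \<Rightarrow> bool" where
  "has_msg m t \<longleftrightarrow> (\<exists>m'. subterm (ex t m') m)"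

end

theory Submission
  imports Defs
begin

lemma sub_bt: "subterm x bt \<Longrightarrow> x = bt"
  by (erule subterm.cases) auto

lemma sub_ex: "subterm x (ex t m) \<Longrightarrow> x = ex t m \<or> subterm x m"
  by (erule subterm.cases) auto

lemma has_ex: "has_msg (ex t' m) t \<Longrightarrow> t \<noteq> t' \<Longrightarrow> has_msg m t"
proof -
  assume h: "has_msg (ex t' m) t" and ne: "t \<noteq> t'"
  then obtain m' where "subterm (ex t m') (ex t' m)" unfolding has_msg_def by blast
  from sub_ex[OF this] ne have "subterm (ex t m') m" by simp
  then show "has_msg m t" unfolding has_msg_def by blast
qed

lemma has_bt: "\<not> has_msg bt t"
proof
  assume "has_msg bt t"
  then obtain m' where "subterm (ex t m') bt" unfolding has_msg_def by blast
  from sub_bt[OF this] show False by simp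
qed

theorem lemma1:
  fixes \<pi> :: "nat \<Rightarrow> 'msg state" and t :: 'msg and i k :: nat
  assumes "is_path \<pi>" and "i \<le> k" and "has_msg (\<pi> k) t"
  shows "subterm (\<pi> i) (\<pi> k) \<or> (\<exists>j. i \<le> j \<and> j < k \<and> \<pi> (Suc j) = ex t (\<pi> j))"
  using assms(2,3)
proof (induction k rule: dec_induct)
  case base
  then show ?case by (simp add: subterm_refl)
next
  case (step k)
  have tr: "tpm_trans (\<pi> k) (\<pi> (Suc k))" using assms(1) unfolding is_path_def by blast
  have IH: "has_msg (\<pi> k) t \<Longrightarrow> subterm (\<pi> i) (\<pi> k) \<or> (\<exists>j. i \<le> j \<and> j < k \<and> \<pi> (Suc j) = ex t (\<pi> j))"
    by (rule step.IH)
  have H: "has_msg (\<pi> (Suc k)) t" by (rule step.prems)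
  have ik: "i \<le> k" by (rule step.hyps)
  from tr consider (b) "\<pi> (Suc k) = bt" | (x) t' where "\<pi> (Suc k) = ex t' (\<pi> k)" | (s) "\<pi> k = \<pi> (Suc k)"
    unfolding tpm_trans_def by blast
  then show ?case
  proof cases
    case b
    then show ?thesis using H has_bt by metis
  next
    case s
    then have "has_msg (\<pi> k) t" using H by simp
    then have "subterm (\<pi> i) (\<pi> k) \<or> (\<exists>j. i \<le> j \<and> j < k \<and> \<pi> (Suc j) = ex t (\<pi> j))" by (rule IH)
    then show ?thesis
    proof
      assume "subterm (\<pi> i) (\<pi> k)" then show ?thesis using s by simp
    next
      assume "\<exists>j. i \<le> j \<and> j < k \<and> \<pi> (Suc j) = ex t (\<pi> j)"
      then obtain j where "i \<le> j" "j < k" "\<pi> (Suc j) = ex t (\<pi> j)" by blast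
      then show ?thesis using less_SucI by blast
    qed
  next
    case (x t')
    show ?thesis
    proof (cases "t = t'")
      case True
      then have "\<pi> (Suc k) = ex t (\<pi> k)" using x by simp
      then show ?thesis using ik by blast
    next
      case False
      have "has_msg (ex t' (\<pi> k)) t" using H x by simp
      then have "has_msg (\<pi> k) t" using has_ex False by metis
      then have "subterm (\<pi> i) (\<pi> k) \<or> (\<exists>j. i \<le> j \<and> j < k \<and> \<pi> (Suc j) = ex t (\<pi> j))" by (rule IH)
      then show ?thesis
      proof
        assume "subterm (\<pi> i) (\<pi> k)"
        then have "subterm (\<pi> i) (ex t' (\<pi> k))" by (rule subterm_ex)
        then show ?thesis using x by simp
      next
        assume "\<exists>j. i \<le> j \<and> j < k \<and> \<pi> (Suc j) = ex t (\<pi> j)"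
        then obtain j where "i \<le> j" "j < k" "\<pi> (Suc j) = ex t (\<pi> j)" by blast
        then show ?thesis using less_SucI by blast
      qed
    qed
  qed
qed

end
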